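(* Let $\mu>0$ and let $X$ have the skew-symmetric-Laplace-uniform density $g$ with parameter $\mu$ (defined in the context), with reliability function $R(x)=P(X>x)$. Then the hazard rate $h(x)=g(x)/R(x)$ is $$h(x)=\begin{cases}0 & x<-\mu,\\ \left[-1+\dfrac{1+(2\mu-e^{-\mu})e^{-x}}{x+\mu}\right]^{-1} & -\mu\le x<0,\\ \left[1+\dfrac{1-e^{x-\mu}}{x+\mu}\right]^{-1} & 0\le x<\mu,\\ 1 & x\ge\mu,\end{cases}$$ (where at $x=-\mu$ the bracketed expression is interpreted as $+\infty$, so $h(-\mu)=0$). Moreover, for every $\mu\in\mathbb{R}\setminus\{0\}$ (positive or negative), the hazard rate of $SSLUD(\mu)$ is a nondecreasing function of $x$ on the set $\{x: R(x)>0\}$; that is, $SSLUD(\mu)$ is an increasing failure rate (IFR) distribution.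
   Context: For $\mu\in\mathbb{R}\setminus\{0\}$, the skew-symmetric-Laplace-uniform distribution $SSLUD(\mu)$ is the distribution on $\mathbb{R}$ with density $$g(x)=\begin{cases} 0 & \text{if } x/\mu<-1,\\ e^{-|x|}\left(\dfrac{x}{2\mu}+\dfrac12\right) & \text{if } -1\le x/\mu<1,\\ e^{-|x|} & \text{if } x/\mu\ge 1.\end{cases}$$ The hazard rate is $h(x)=g(x)/R(x)$ with $R(x)=1-G(x)$, $G$ the cdf. *)

theory Defs
  imports "HOL-Analysis.Analysis"
begin

definition sslud_density :: "real \<Rightarrow> real \<Rightarrow> real" where
  "sslud_density mu x =
     (if x / mu < -1 then 0
      else if x / mu < 1 then exp (- \<bar>x\<bar>) * (x / (2 * mu) + 1 / 2)
      else exp (- \<bar>x\<bar>))"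

definition sslud_distr :: "real \<Rightarrow> real measure" where
  "sslud_distr mu = density lborel (\<lambda>t. ennreal (sslud_density mu t))"

definition sslud_R :: "real \<Rightarrow> real \<Rightarrow> real" where
  "sslud_R mu x = measure (sslud_distr mu) {x<..}"

definition sslud_hazard :: "real \<Rightarrow> real \<Rightarrow> real" where
  "sslud_hazard mu x = sslud_density mu x / sslud_R mu x"

end

theory Submission imports Defs begin

lemma tail_integral:
  fixes f F :: "real \<Rightarrow> real"
  assumes S: "finite S" and cF: "continuous_on UNIV F"
    and dF: "\<And>x. x \<notin> S \<Longrightarrow> (F has_real_derivative - f x) (at x)"
    and nn: "\<And>x. f x \<ge> 0" and lim: "(F \<longlongrightarrow> 0) at_top"
  shows "(f has_integral F a) {a..}"
proof -
  have I: "(f has_integral (F a - F y)) {a..y}" if "a \<le> y" for y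
  proof -
    have "(f has_integral ((\<lambda>x. - F x) y - (\<lambda>x. - F x) a)) {a..y}"
    proof (rule fundamental_theorem_of_calculus_interior_strong[OF S that])
      fix x assume "x \<in> {a<..<y} - S"
      then have "((\<lambda>x. - F x) has_real_derivative - (- f x)) (at x)"
        using dF by (intro derivative_intros) auto
      then show "((\<lambda>x. - F x) has_vector_derivative f x) (at x)"
        by (simp add: has_real_derivative_iff_has_vector_derivative)
    next
      show "continuous_on {a..y} (\<lambda>x. - F x)"
        using cF by (intro continuous_intros) (auto intro: continuous_on_subset)
    qed
    then show ?thesis by simp
  qed
  show ?thesis
  proof (rule has_integral_to_inf)
    fix y show "f integrable_on {a..y}"
      using I by (cases "a \<le> y") (auto simp: integrable_on_def)
  next
    have "\<forall>\<^sub>F y in at_top. integral {a..y} f = F a - F y"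
      using eventually_ge_at_top[of a] by eventually_elim (use I in auto)
    moreover have "((\<lambda>y. F a - F y) \<longlongrightarrow> F a - 0) at_top"
      by (intro tendsto_intros lim)
    ultimately show "((\<lambda>y. integral {a..y} f) \<longlongrightarrow> F a) at_top"
      by (simp add: filterlim_cong tendsto_cong)
  qed (use nn in auto)
qed

lemma measure_from_integral:
  fixes f :: "real \<Rightarrow> real"
  assumes I: "(f has_integral r) {a..}" and nn: "\<And>x. f x \<ge> 0"
    and meas: "f \<in> borel_measurable borel"
  shows "measure (density lborel (\<lambda>t. ennreal (f t))) {a<..} = r"
proof -
  have I': "(f has_integral r) {a<..}"
    using I by (subst has_integral_spike_set_eq[where S="{a<..}" and T="{a..}"])
       (auto intro: negligible_subset[of "{a}"])
  have "r \<ge> 0" using I nn has_integral_nonneg by blast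
  have "emeasure (density lborel (\<lambda>t. ennreal (f t))) {a<..} = (\<integral>\<^sup>+ x. ennreal (f x) * indicator {a<..} x \<partial>lborel)"
    using meas by (subst emeasure_density) auto
  also have "\<dots> = (\<integral>\<^sup>+ x. ennreal (indicator {a<..} x * f x) \<partial>lborel)"
    by (intro nn_integral_cong) (auto simp: indicator_def)
  also have "\<dots> = ennreal r"
    using nn_integral_has_integral_lebesgue[OF _ I'] nn by simp
  finally show ?thesis using \<open>r \<ge> 0\<close> by (simp add: measure_def)
qed

lemma dens_meas: "sslud_density mu \<in> borel_measurable borel"
  unfolding sslud_density_def[abs_def] by measurable

lemma deriv_piece:
  fixes F P :: "real \<Rightarrow> real"
  assumes "(P has_real_derivative d) (at x)" "open S" "x \<in> S" "\<And>z. z \<in> S \<Longrightarrow> P z = F z"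
  shows "(F has_real_derivative d) (at x)"
  using has_field_derivative_transform_within_open[OF assms] .

lemma cont_cong:
  assumes "continuous_on S P" "\<And>x. x \<in> S \<Longrightarrow> P x = F x"
  shows "continuous_on S F"
  using assms continuous_on_cong by blast

lemma gpos: "mu > 0 \<Longrightarrow> sslud_density mu x =
   (if x \<le> -mu then 0 else if x \<le> mu then exp (-\<bar>x\<bar>) * (x + mu) / (2*mu) else exp (-x))"
  unfolding sslud_density_def by (auto simp: field_simps)

lemma gneg: "m > 0 \<Longrightarrow> sslud_density (-m) x =
   (if x \<le> -m then exp x else if x \<le> m then exp (-\<bar>x\<bar>) * (m - x) / (2*m) else 0)"
  unfolding sslud_density_def by (auto simp: field_simps)

definition Rp :: "real \<Rightarrow> real \<Rightarrow> real" where
  "Rp mu x = (if x \<le> -mu then 1 else if x \<le> 0 then (2*mu - exp(-mu) - exp x*(x+mu-1))/(2*mu)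
     else if x \<le> mu then (exp(-x)*(x+mu+1) - exp(-mu))/(2*mu) else exp(-x))"

definition Rn :: "real \<Rightarrow> real \<Rightarrow> real" where
  "Rn m x = (if x \<le> -m then 1 - exp x else if x \<le> 0 then (exp(-m) + 2*m - exp x*(m-x+1))/(2*m)
     else if x \<le> m then (exp(-m) - exp(-x)*(x-m+1))/(2*m) else 0)"

lemma Rp_cont: assumes "mu > 0" shows "continuous_on UNIV (Rp mu)"
proof -
  have U: "UNIV = {..-mu} \<union> {-mu..0} \<union> {0..mu} \<union> {mu..}" using assms by auto
  have c1: "continuous_on {..-mu} (Rp mu)"
    by (rule continuous_on_cong[THEN iffD1, OF refl _ continuous_on_const[of _ 1]]) (auto simp: Rp_def)
  have c2: "continuous_on {-mu..0} (Rp mu)"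
    apply (rule cont_cong[where P="\<lambda>x. (2*mu - exp(-mu) - exp x*(x+mu-1))/(2*mu)"])
     apply (intro continuous_intros; use assms in auto)
    by (use assms in \<open>auto simp: Rp_def field_simps\<close>)
  have c3: "continuous_on {0..mu} (Rp mu)"
    apply (rule cont_cong[where P="\<lambda>x. (exp(-x)*(x+mu+1) - exp(-mu))/(2*mu)"])
     apply (intro continuous_intros; use assms in auto)
    by (use assms in \<open>auto simp: Rp_def field_simps\<close>)
  have c4: "continuous_on {mu..} (Rp mu)"
    apply (rule cont_cong[where P="\<lambda>x. exp(-x)"])
     apply (intro continuous_intros)
    by (use assms in \<open>auto simp: Rp_def field_simps\<close>)
  show ?thesis unfolding U
    by (intro continuous_on_closed_Un c1 c2 c3 c4 closed_Un) auto
qed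


lemma Rp_deriv:
  assumes mu: "mu > 0" and x: "x \<notin> {-mu, 0, mu}"
  shows "(Rp mu has_real_derivative - sslud_density mu x) (at x)"
proof -
  consider "x < -mu" | "-mu < x" "x < 0" | "0 < x" "x < mu" | "mu < x" using x by force
  then show ?thesis
  proof cases
    case 1
    show ?thesis
      by (rule deriv_piece[where P="\<lambda>_. 1" and S="{..< -mu}"])
         (use 1 mu in \<open>auto intro!: derivative_eq_intros simp: gpos Rp_def\<close>)
  next
    case 2
    show ?thesis
      by (rule deriv_piece[where P="\<lambda>x. (2*mu - exp(-mu) - exp x*(x+mu-1))/(2*mu)" and S="{-mu<..<0}"])
         (use 2 mu in \<open>auto intro!: derivative_eq_intros simp: gpos Rp_def field_simps\<close>)
  next
    case 3
    show ?thesis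
      by (rule deriv_piece[where P="\<lambda>x. (exp(-x)*(x+mu+1) - exp(-mu))/(2*mu)" and S="{0<..<mu}"])
         (use 3 mu in \<open>auto intro!: derivative_eq_intros simp: gpos Rp_def field_simps\<close>)
  next
    case 4
    show ?thesis
      by (rule deriv_piece[where P="\<lambda>x. exp(-x)" and S="{mu<..}"])
         (use 4 mu in \<open>auto intro!: derivative_eq_intros simp: gpos Rp_def field_simps\<close>)
  qed
qed

lemma Rn_cont: assumes "m > 0" shows "continuous_on UNIV (Rn m)"
proof -
  have U: "UNIV = {..-m} \<union> {-m..0} \<union> {0..m} \<union> {m..}" using assms by auto
  have c1: "continuous_on {..-m} (Rn m)"
    apply (rule cont_cong[where P="\<lambda>x. 1 - exp x"])
     apply (intro continuous_intros)
    by (use assms in \<open>auto simp: Rn_def field_simps\<close>)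
  have c2: "continuous_on {-m..0} (Rn m)"
    apply (rule cont_cong[where P="\<lambda>x. (exp(-m) + 2*m - exp x*(m-x+1))/(2*m)"])
     apply (intro continuous_intros; use assms in auto)
    by (use assms in \<open>auto simp: Rn_def field_simps\<close>)
  have c3: "continuous_on {0..m} (Rn m)"
    apply (rule cont_cong[where P="\<lambda>x. (exp(-m) - exp(-x)*(x-m+1))/(2*m)"])
     apply (intro continuous_intros; use assms in auto)
    by (use assms in \<open>auto simp: Rn_def field_simps\<close>)
  have c4: "continuous_on {m..} (Rn m)"
    apply (rule cont_cong[where P="\<lambda>x. 0"])
     apply (intro continuous_intros)
    by (use assms in \<open>auto simp: Rn_def field_simps\<close>)
  show ?thesis unfolding U
    by (intro continuous_on_closed_Un c1 c2 c3 c4 closed_Un) auto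
qed

lemma Rn_deriv:
  assumes m: "m > 0" and x: "x \<notin> {-m, 0, m}"
  shows "(Rn m has_real_derivative - sslud_density (-m) x) (at x)"
proof -
  consider "x < -m" | "-m < x" "x < 0" | "0 < x" "x < m" | "m < x" using x by force
  then show ?thesis
  proof cases
    case 1
    show ?thesis
      by (rule deriv_piece[where P="\<lambda>x. 1 - exp x" and S="{..< -m}"])
         (use 1 m in \<open>auto intro!: derivative_eq_intros simp: gneg Rn_def\<close>)
  next
    case 2
    show ?thesis
      by (rule deriv_piece[where P="\<lambda>x. (exp(-m) + 2*m - exp x*(m-x+1))/(2*m)" and S="{-m<..<0}"])
         (use 2 m in \<open>auto intro!: derivative_eq_intros simp: gneg Rn_def field_simps\<close>)
  next
    case 3
    show ?thesis
      by (rule deriv_piece[where P="\<lambda>x. (exp(-m) - exp(-x)*(x-m+1))/(2*m)" and S="{0<..<m}"])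
         (use 3 m in \<open>auto intro!: derivative_eq_intros simp: gneg Rn_def field_simps\<close>)
  next
    case 4
    show ?thesis
      by (rule deriv_piece[where P="\<lambda>x. 0" and S="{m<..}"])
         (use 4 m in \<open>auto intro!: derivative_eq_intros simp: gneg Rn_def field_simps\<close>)
  qed
qed

lemma g_nonneg: assumes "mu \<noteq> 0" shows "sslud_density mu x \<ge> 0"
proof (cases "mu > 0")
  case True then show ?thesis by (auto simp: gpos)
next
  case False
  then have "-mu > 0" "mu = -(-mu)" using assms by auto
  then show ?thesis by (metis gneg[of "-mu" x] divide_nonneg_pos exp_ge_zero mult_nonneg_nonneg
       diff_ge_0_iff_ge order_refl zero_less_mult_iff zero_less_numeral)
qed

lemma R_pos_formula: assumes "mu > 0" shows "sslud_R mu x = Rp mu x"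
proof -
  have "(sslud_density mu has_integral Rp mu x) {x..}"
  proof (rule tail_integral[where S="{-mu,0,mu}"])
    show "continuous_on UNIV (Rp mu)" using Rp_cont assms .
    show "\<And>x. x \<notin> {-mu,0,mu} \<Longrightarrow> (Rp mu has_real_derivative - sslud_density mu x) (at x)"
      using Rp_deriv assms by blast
    show "\<And>x. sslud_density mu x \<ge> 0" using g_nonneg assms by simp
    have "\<forall>\<^sub>F y in at_top. exp (-y) = Rp mu y"
      using eventually_gt_at_top[of mu] by eventually_elim (use assms in \<open>auto simp: Rp_def\<close>)
    moreover have "((\<lambda>y. exp (-y)) \<longlongrightarrow> (0::real)) at_top"
      by (rule filterlim_compose[OF exp_at_bot filterlim_uminus_at_bot_at_top])
    ultimately show "(Rp mu \<longlongrightarrow> 0) at_top" by (rule Lim_transform_eventually[rotated])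
  qed auto
  then show ?thesis unfolding sslud_R_def sslud_distr_def
    by (intro measure_from_integral) (use g_nonneg assms dens_meas in auto)
qed

lemma R_neg_formula: assumes "m > 0" shows "sslud_R (-m) x = Rn m x"
proof -
  have "(sslud_density (-m) has_integral Rn m x) {x..}"
  proof (rule tail_integral[where S="{-m,0,m}"])
    show "continuous_on UNIV (Rn m)" using Rn_cont assms .
    show "\<And>x. x \<notin> {-m,0,m} \<Longrightarrow> (Rn m has_real_derivative - sslud_density (-m) x) (at x)"
      using Rn_deriv assms by blast
    show "\<And>x. sslud_density (-m) x \<ge> 0" using g_nonneg assms by simp
    have "\<forall>\<^sub>F y in at_top. 0 = Rn m y"
      using eventually_gt_at_top[of m] by eventually_elim (use assms in \<open>auto simp: Rn_def\<close>)
    moreover have "((\<lambda>y. 0) \<longlongrightarrow> (0::real)) at_top" by simp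
    ultimately show "(Rn m \<longlongrightarrow> 0) at_top" by (rule Lim_transform_eventually[rotated])
  qed auto
  then show ?thesis unfolding sslud_R_def sslud_distr_def
    by (intro measure_from_integral) (use g_nonneg assms dens_meas in auto)
qed


lemma haz_inv: "sslud_hazard mu x = inverse (sslud_R mu x / sslud_density mu x)"
  unfolding sslud_hazard_def by (simp add: inverse_divide)

lemma part1:
  assumes mu: "mu > 0"
  shows "sslud_hazard mu x =
              (if x \<le> - mu then 0
               else if x < 0 then
                 inverse (-1 + (1 + (2 * mu - exp (- mu)) * exp (- x)) / (x + mu))
               else if x < mu then
                 inverse (1 + (1 - exp (x - mu)) / (x + mu))
               else 1)"
proof -
  have ex: "exp (-x) * exp x = 1" by (simp add: exp_minus)
  consider "x \<le> -mu" | "-mu < x" "x < 0" | "0 \<le> x" "x < mu" | "mu \<le> x" by force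
  then show ?thesis
  proof cases
    case 1 then show ?thesis using mu by (simp add: sslud_hazard_def gpos)
  next
    case 2
    have "sslud_R mu x / sslud_density mu x = -1 + (1 + (2 * mu - exp (- mu)) * exp (- x)) / (x + mu)"
    proof -
      have xm: "x + mu > 0" using 2 by auto
      have g: "sslud_density mu x = exp x * (x + mu) / (2*mu)" using 2 mu by (simp add: gpos)
      have R: "sslud_R mu x = (2*mu - exp(-mu) - exp x*(x+mu-1)) / (2*mu)"
        using 2 mu by (simp add: R_pos_formula Rp_def)
      have "sslud_R mu x / sslud_density mu x = (2*mu - exp(-mu) - exp x*(x+mu-1)) / (exp x * (x + mu))"
        unfolding g R using mu by simp
      also have "\<dots> = ((2*mu - exp(-mu)) * exp (-x) - (x+mu-1)) / (x + mu)"
        using xm by (simp add: exp_minus field_simps)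
      also have "\<dots> = -1 + (1 + (2 * mu - exp (- mu)) * exp (- x)) / (x + mu)"
        using xm by (simp add: field_simps)
      finally show ?thesis .
    qed
    then show ?thesis using 2 by (simp add: haz_inv)
  next
    case 3
    have "sslud_R mu x / sslud_density mu x = 1 + (1 - exp (x - mu)) / (x + mu)"
    proof -
      have xm: "x + mu > 0" using 3 mu by auto
      have g: "sslud_density mu x = exp (-x) * (x + mu) / (2*mu)" using 3 mu by (simp add: gpos)
      have R: "sslud_R mu x = (exp(-x)*(x+mu+1) - exp(-mu)) / (2*mu)"
        using 3 mu by (auto simp: R_pos_formula Rp_def)
      have "sslud_R mu x / sslud_density mu x = (exp(-x)*(x+mu+1) - exp(-mu)) / (exp (-x) * (x + mu))"
        unfolding g R using mu by simp
      also have "\<dots> = (exp x * (exp(-x)*(x+mu+1) - exp(-mu))) / (exp x * (exp (-x) * (x + mu)))"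
        by simp
      also have "exp x * (exp(-x)*(x+mu+1) - exp(-mu)) = (x+mu+1) - exp (x - mu)"
        by (simp add: algebra_simps exp_minus exp_diff divide_inverse)
      also have "exp x * (exp (-x) * (x + mu)) = x + mu"
        by (simp add: exp_minus)
      finally have "sslud_R mu x / sslud_density mu x = ((x+mu+1) - exp (x - mu)) / (x + mu)" .
      also have "\<dots> = 1 + (1 - exp (x - mu)) / (x + mu)"
        using xm by (simp add: field_simps)
      finally show ?thesis .
    qed
    then show ?thesis using 3 mu by (simp add: haz_inv)
  next
    case 4
    then show ?thesis using mu by (auto simp: haz_inv R_pos_formula Rp_def gpos field_simps)
  qed
qed


lemma mono_glue:
  fixes f :: "real \<Rightarrow> real"
  assumes "mono_on A f" "mono_on B f" "p \<in> A" "p \<in> B" "\<And>a. a \<in> A \<Longrightarrow> a \<le> p" "\<And>b. b \<in> B \<Longrightarrow> p \<le> b"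
  shows "mono_on (A \<union> B) f"
proof (rule mono_onI)
  fix x y assume xy: "x \<in> A \<union> B" "y \<in> A \<union> B" "x \<le> y"
  show "f x \<le> f y"
  proof (cases "x \<in> A")
    case xA: True
    show ?thesis
    proof (cases "y \<in> A")
      case True then show ?thesis using xA xy assms(1) by (auto dest: mono_onD)
    next
      case False
      then have "y \<in> B" using xy by auto
      have "f x \<le> f p" using xA assms(1,3,5) by (auto dest: mono_onD)
      also have "f p \<le> f y" using \<open>y \<in> B\<close> assms(2,4,6) by (auto dest: mono_onD)
      finally show ?thesis .
    qed
  next
    case False
    then have "x \<in> B" using xy by auto
    have "y \<in> B"
    proof (rule ccontr)
      assume "y \<notin> B" then have "y \<in> A" using xy by auto
      then have "y \<le> p" "p \<le> x" using assms(5,6) \<open>x \<in> B\<close> by auto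
      then have "x = p" using xy by auto
      then show False using False assms(3) by auto
    qed
    then show ?thesis using \<open>x \<in> B\<close> xy assms(2) by (auto dest: mono_onD)
  qed
qed

lemma haz_nonneg: "mu \<noteq> 0 \<Longrightarrow> sslud_hazard mu x \<ge> 0"
  unfolding sslud_hazard_def sslud_R_def using g_nonneg by (simp add: divide_nonneg_nonneg)

definition D1 :: "real \<Rightarrow> real \<Rightarrow> real" where
  "D1 mu t = -1 + (1 + (2 * mu - exp (- mu)) * exp (- t)) / (t + mu)"

lemma D1_mono:
  assumes mu: "mu > 0" and x: "-mu < x" and xy: "x \<le> y"
  shows "D1 mu y \<le> D1 mu x"
proof (rule DERIV_nonpos_imp_nonincreasing[OF xy])
  fix t assume t: "x \<le> t" "t \<le> y"
  then have tm: "t + mu > 0" using x by auto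
  let ?K = "2 * mu - exp (- mu)"
  have d: "(D1 mu has_real_derivative - (1 + ?K * exp (-t) * (t + mu + 1)) / (t + mu)^2) (at t)"
    unfolding D1_def[abs_def]
    by (rule derivative_eq_intros refl | use tm in \<open>simp add: field_simps power2_eq_square\<close>)+
  have e1: "exp (t + mu) \<ge> t + mu + 1" using exp_ge_add_one_self[of "t+mu"] by (simp add: add.commute add.left_commute)
  have "exp t = exp (-mu) * exp (t + mu)" by (simp add: exp_add[symmetric])
  also have "\<dots> \<ge> exp (-mu) * (t + mu + 1)" using e1 by (intro mult_left_mono) auto
  finally have "exp t + ?K * (t + mu + 1) \<ge> 2 * mu * (t + mu + 1)" by (simp add: algebra_simps)
  moreover have "2 * mu * (t + mu + 1) \<ge> 0" using tm mu by auto
  ultimately have "exp t + ?K * (t + mu + 1) \<ge> 0" by linarith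
  then have "exp (-t) * (exp t + ?K * (t + mu + 1)) \<ge> 0" by simp
  then have "1 + ?K * exp (-t) * (t + mu + 1) \<ge> 0"
    by (simp add: algebra_simps exp_minus)
  then show "\<exists>d. (D1 mu has_real_derivative d) (at t) \<and> d \<le> 0"
    apply (intro exI[of _ "- (1 + ?K * exp (-t) * (t + mu + 1)) / (t + mu)^2"] conjI d)
    by (rule divide_nonpos_nonneg) auto
qed


lemma mono_pos: assumes mu: "mu > 0" shows "mono_on UNIV (sslud_hazard mu)"
proof -
  let ?h = "sslud_hazard mu"
  have P1: "mono_on {..-mu} ?h"
    by (rule mono_onI) (use mu in \<open>auto simp: part1\<close>)
  have D10: "D1 mu 0 = 1 + (1 - exp (- mu)) / mu" using mu by (simp add: D1_def field_simps)
  have D10pos: "D1 mu 0 > 0" using mu unfolding D10 by (simp add: add_pos_nonneg)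
  have hD: "?h t = inverse (D1 mu t)" if "-mu < t" "t \<le> 0" for t
  proof (cases "t < 0")
    case True then show ?thesis using that by (simp add: part1 D1_def)
  next
    case False then have "t = 0" using that by auto
    then show ?thesis using mu by (simp add: part1 D10)
  qed
  have P2: "mono_on {-mu..0} ?h"
  proof (rule mono_onI)
    fix x y assume xy: "x \<in> {-mu..0}" "y \<in> {-mu..0}" "x \<le> y"
    show "?h x \<le> ?h y"
    proof (cases "x = -mu")
      case True then show ?thesis using mu haz_nonneg[of mu y] by (simp add: part1)
    next
      case False
      then have x: "-mu < x" using xy by auto
      have "D1 mu 0 \<le> D1 mu y" using D1_mono[OF mu, of y 0] x xy by auto
      then have Dy: "D1 mu y > 0" using D10pos by linarith
      have "D1 mu y \<le> D1 mu x" using D1_mono[OF mu x xy(3)] .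
      then have "inverse (D1 mu x) \<le> inverse (D1 mu y)" using Dy by (rule le_imp_inverse_le)
      then show ?thesis using hD x xy by auto
    qed
  qed
  define E where "E t = 1 + (1 - exp (t - mu)) / (t + mu)" for t
  have hE: "?h t = inverse (E t)" if "0 \<le> t" "t \<le> mu" for t
  proof (cases "t < mu")
    case True then show ?thesis using that mu by (simp add: part1 E_def)
  next
    case False then have "t = mu" using that by auto
    then show ?thesis using mu by (simp add: part1 E_def)
  qed
  have P3: "mono_on {0..mu} ?h"
  proof (rule mono_onI)
    fix x y assume xy: "x \<in> {0..mu}" "y \<in> {0..mu}" "x \<le> y"
    have ey: "1 - exp (y - mu) \<ge> 0" "1 - exp (x - mu) \<ge> 1 - exp (y - mu)" using xy by auto
    have "(1 - exp (y - mu)) / (y + mu) \<le> (1 - exp (x - mu)) / (x + mu)"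
      by (rule frac_le) (use ey xy mu in auto)
    then have "E y \<le> E x" by (simp add: E_def)
    moreover have "E y > 0" unfolding E_def using ey xy mu by (intro add_pos_nonneg) auto
    ultimately have "inverse (E x) \<le> inverse (E y)" by (rule le_imp_inverse_le)
    then show "?h x \<le> ?h y" using hE xy by auto
  qed
  have P4: "mono_on {mu..} ?h"
    by (rule mono_onI) (use mu in \<open>auto simp: part1\<close>)
  have "mono_on (({..-mu} \<union> {-mu..0}) \<union> {0..mu} \<union> {mu..}) ?h"
    apply (rule mono_glue[where p=mu])
         apply (rule mono_glue[where p=0])
               apply (rule mono_glue[where p="-mu"])
    by (use P1 P2 P3 P4 mu in auto)
  moreover have "({..-mu} \<union> {-mu..0}) \<union> {0..mu} \<union> {mu..} = UNIV" using mu by auto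
  ultimately show ?thesis by simp
qed


lemma exp_strict: assumes "x \<noteq> 0" shows "1 + x < exp (x::real)"
proof (cases "1 + x/2 \<ge> 0")
  case True
  have "(1 + x/2)^2 \<le> exp (x/2) ^ 2"
    using True exp_ge_add_one_self[of "x/2"] by (intro power_mono) auto
  also have "exp (x/2) ^ 2 = exp x" by (simp add: exp_double[symmetric] power2_eq_square exp_add[symmetric])
  finally have "(1 + x/2)^2 \<le> exp x" .
  moreover have "0 < x * x" using assms by (auto simp: zero_less_mult_iff)
  then have "1 + x < (1 + x/2)^2" by (simp add: power2_eq_square field_simps)
  ultimately show ?thesis by linarith
next
  case False then show ?thesis using exp_gt_zero[of x] by linarith
qed

definition D2 :: "real \<Rightarrow> real \<Rightarrow> real" where
  "D2 m t = ((exp (-m) + 2*m) * exp (-t) - 1) / (m - t) - 1"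

definition D3 :: "real \<Rightarrow> real \<Rightarrow> real" where
  "D3 m t = (exp (t - m) - (t - m + 1)) / (m - t)"

lemma L_bound: fixes m :: real assumes m: "m > 0" shows "(exp (-m) + 2*m) * (1 - m) \<le> 1"
proof (cases "m \<ge> 1")
  case True
  have "exp (-m) + 2*m > 0" using m by (simp add: add_pos_pos)
  moreover have "1 - m \<le> 0" using True by simp
  ultimately have "(exp (-m) + 2*m) * (1 - m) \<le> 0" by (intro mult_nonneg_nonpos) auto
  then show ?thesis by linarith
next
  case False
  have e: "exp (-m) * (1 + m) \<le> 1"
  proof -
    have "exp (-m) * (1 + m) \<le> exp (-m) * exp m" using exp_ge_add_one_self[of m] by (intro mult_left_mono) auto
    also have "\<dots> = 1" by (simp add: exp_minus)
    finally show ?thesis .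
  qed
  have "(1 + m) * ((exp (-m) + 2*m) * (1 - m)) = (exp (-m) * (1 + m)) * (1 - m) + 2*m*(1 - m*m)"
    by (simp add: algebra_simps)
  also have "\<dots> \<le> 1 * (1 - m) + 2*m*(1 - m*m)"
    using e False by (intro add_right_mono mult_right_mono) auto
  also have "\<dots> \<le> (1 + m) * 1" using m by (simp add: algebra_simps)
  finally show ?thesis using m by (simp add: mult_le_cancel_left_pos)
qed

lemma D2_mono:
  assumes m: "m > 0" and x: "-m \<le> x" and xy: "x \<le> y" and y: "y \<le> 0"
  shows "D2 m y \<le> D2 m x"
proof (rule DERIV_nonpos_imp_nonincreasing[OF xy])
  fix t assume t: "x \<le> t" "t \<le> y"
  then have tm: "m - t > 0" "t \<le> 0" using y m by auto
  let ?L = "exp (-m) + 2*m"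
  have d: "(D2 m has_real_derivative (?L * exp (-t) * (1 - m + t) - 1) / (m - t)^2) (at t)"
    unfolding D2_def[abs_def]
    by (rule derivative_eq_intros refl | use tm in \<open>simp add: field_simps power2_eq_square\<close>)+
  have L1: "?L \<ge> 1" using exp_ge_add_one_self[of "-m"] m by linarith
  have "?L * (1 - m + t) = ?L * (1 - m) + ?L * t" by (simp add: algebra_simps)
  also have "\<dots> \<le> 1 + t" using L_bound[OF m] L1 tm(2)
    by (smt (verit) mult_le_cancel_right mult_cancel_right2)
  also have "\<dots> \<le> exp t" using exp_ge_add_one_self[of t] by simp
  finally have "?L * (1 - m + t) \<le> exp t" .
  then have "exp (-t) * (?L * (1 - m + t)) \<le> exp (-t) * exp t" by (intro mult_left_mono) auto
  then have "?L * exp (-t) * (1 - m + t) - 1 \<le> 0" by (simp add: exp_minus algebra_simps)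
  then show "\<exists>d. (D2 m has_real_derivative d) (at t) \<and> d \<le> 0"
    apply (intro exI[of _ "(?L * exp (-t) * (1 - m + t) - 1) / (m - t)^2"] conjI d)
    by (rule divide_nonpos_nonneg) auto
qed

lemma D3_mono:
  assumes m: "m > 0" and xy: "x \<le> y" and y: "y < m"
  shows "D3 m y \<le> D3 m x"
proof (rule DERIV_nonpos_imp_nonincreasing[OF xy])
  fix t assume t: "x \<le> t" "t \<le> y"
  then have tm: "m - t > 0" using y by auto
  have d: "(D3 m has_real_derivative (exp (t - m) * (m - t + 1) - 1) / (m - t)^2) (at t)"
    unfolding D3_def[abs_def]
    by (rule derivative_eq_intros refl | use tm in \<open>simp add: field_simps power2_eq_square\<close>)+
  have "m - t + 1 \<le> exp (m - t)" using exp_ge_add_one_self[of "m - t"] by linarith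
  then have "exp (t - m) * (m - t + 1) \<le> exp (t - m) * exp (m - t)"
    by (intro mult_left_mono) auto
  also have "\<dots> = 1" by (simp add: exp_add[symmetric])
  finally have "exp (t - m) * (m - t + 1) - 1 \<le> 0" by simp
  then show "\<exists>d. (D3 m has_real_derivative d) (at t) \<and> d \<le> 0"
    apply (intro exI[of _ "(exp (t - m) * (m - t + 1) - 1) / (m - t)^2"] conjI d)
    by (rule divide_nonpos_nonneg) auto
qed


lemma mono_neg: assumes m: "m > 0" shows "mono_on {..<m} (sslud_hazard (-m))"
proof -
  let ?h = "sslud_hazard (-m)"
  let ?L = "exp (-m) + 2*m"
  have hQ1: "?h t = exp t / (1 - exp t)" if "t \<le> -m" for t
    using that m by (simp add: sslud_hazard_def R_neg_formula Rn_def gneg)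
  have hQ2: "?h t = inverse (D2 m t)" if t: "-m \<le> t" "t \<le> 0" for t
  proof -
    have g: "sslud_density (-m) t = exp t * (m - t) / (2*m)"
      using t m by (cases "t = -m") (auto simp: gneg)
    have R: "sslud_R (-m) t = (?L - exp t * (m - t + 1)) / (2*m)"
      using t m by (cases "t = -m") (auto simp: R_neg_formula Rn_def field_simps)
    have tm: "m - t > 0" using t m by auto
    have "sslud_R (-m) t / sslud_density (-m) t = (?L - exp t * (m - t + 1)) / (exp t * (m - t))"
      unfolding g R using m by simp
    also have "\<dots> = (exp (-t) * (?L - exp t * (m - t + 1))) / (exp (-t) * (exp t * (m - t)))"
      by simp
    also have "exp (-t) * (?L - exp t * (m - t + 1)) = ?L * exp (-t) - (m - t + 1)"
      by (simp add: algebra_simps exp_minus)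
    also have "exp (-t) * (exp t * (m - t)) = m - t"
      by (simp add: exp_minus)
    finally have "sslud_R (-m) t / sslud_density (-m) t = (?L * exp (-t) - (m - t + 1)) / (m - t)" .
    also have "\<dots> = D2 m t" using tm by (simp add: D2_def field_simps)
    finally show ?thesis by (simp add: haz_inv)
  qed
  have hQ3: "?h t = inverse (D3 m t)" if t: "0 \<le> t" "t < m" for t
  proof -
    have g: "sslud_density (-m) t = exp (-t) * (m - t) / (2*m)"
      using t m by (auto simp: gneg)
    have R: "sslud_R (-m) t = (exp (-m) - exp (-t) * (t - m + 1)) / (2*m)"
      using t m by (cases "t = 0") (auto simp: R_neg_formula Rn_def field_simps)
    have tm: "m - t > 0" using t m by auto
    have "sslud_R (-m) t / sslud_density (-m) t = (exp (-m) - exp (-t) * (t - m + 1)) / (exp (-t) * (m - t))"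
      unfolding g R using m by simp
    also have "\<dots> = (exp t * (exp (-m) - exp (-t) * (t - m + 1))) / (exp t * (exp (-t) * (m - t)))"
      by simp
    also have "exp t * (exp (-m) - exp (-t) * (t - m + 1)) = exp (t - m) - (t - m + 1)"
      by (simp add: algebra_simps exp_minus exp_diff divide_inverse)
    also have "exp t * (exp (-t) * (m - t)) = m - t"
      by (simp add: exp_minus)
    finally show ?thesis by (simp add: haz_inv D3_def)
  qed
  have P1: "mono_on {..-m} ?h"
  proof (rule mono_onI)
    fix x y assume xy: "x \<in> {..-m}" "y \<in> {..-m}" "x \<le> y"
    have "exp y < 1" using xy m by auto
    then have "exp x / (1 - exp x) \<le> exp y / (1 - exp y)"
      using xy by (intro frac_le) auto
    then show "?h x \<le> ?h y" using hQ1 xy by auto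
  qed
  have D20: "D2 m 0 = (exp (-m) + m - 1) / m" using m by (simp add: D2_def field_simps)
  have D20pos: "D2 m 0 > 0" unfolding D20 using exp_strict[of "-m"] m by simp
  have P2: "mono_on {-m..0} ?h"
  proof (rule mono_onI)
    fix x y assume xy: "x \<in> {-m..0}" "y \<in> {-m..0}" "x \<le> y"
    have "D2 m 0 \<le> D2 m y" using D2_mono[OF m, of y 0] xy by auto
    then have Dy: "D2 m y > 0" using D20pos by linarith
    have "D2 m y \<le> D2 m x" using D2_mono[OF m, of x y] xy by auto
    then have "inverse (D2 m x) \<le> inverse (D2 m y)" using Dy by (rule le_imp_inverse_le)
    then show "?h x \<le> ?h y" using hQ2 xy by auto
  qed
  have P3: "mono_on {0..<m} ?h"
  proof (rule mono_onI)
    fix x y assume xy: "x \<in> {0..<m}" "y \<in> {0..<m}" "x \<le> y"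
    have "exp (y - m) > 1 + (y - m)" using exp_strict[of "y - m"] xy by auto
    then have Dy: "D3 m y > 0" using xy unfolding D3_def by (intro divide_pos_pos) auto
    have "D3 m y \<le> D3 m x" using D3_mono[OF m, of x y] xy by auto
    then have "inverse (D3 m x) \<le> inverse (D3 m y)" using Dy by (rule le_imp_inverse_le)
    then show "?h x \<le> ?h y" using hQ3 xy by auto
  qed
  have "mono_on (({..-m} \<union> {-m..0}) \<union> {0..<m}) ?h"
    apply (rule mono_glue[where p=0])
         apply (rule mono_glue[where p="-m"])
    by (use P1 P2 P3 m in auto)
  moreover have "({..-m} \<union> {-m..0}) \<union> {0..<m} = {..<m}" using m by auto
  ultimately show ?thesis by simp
qed


theorem mainTheorem6:
  shows "(\<forall>mu::real. mu > 0 \<longrightarrow> (\<forall>x::real.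
            sslud_hazard mu x =
              (if x \<le> - mu then 0
               else if x < 0 then
                 inverse (-1 + (1 + (2 * mu - exp (- mu)) * exp (- x)) / (x + mu))
               else if x < mu then
                 inverse (1 + (1 - exp (x - mu)) / (x + mu))
               else 1)))
       \<and> (\<forall>mu::real. mu \<noteq> 0 \<longrightarrow>
            mono_on {x. sslud_R mu x > 0} (sslud_hazard mu))"
proof (intro conjI allI impI)
  fix mu x :: real assume "mu > 0"
  then show "sslud_hazard mu x =
              (if x \<le> - mu then 0
               else if x < 0 then
                 inverse (-1 + (1 + (2 * mu - exp (- mu)) * exp (- x)) / (x + mu))
               else if x < mu then
                 inverse (1 + (1 - exp (x - mu)) / (x + mu))
               else 1)" by (rule part1)
next
  fix mu :: real assume mu: "mu \<noteq> 0"
  show "mono_on {x. sslud_R mu x > 0} (sslud_hazard mu)"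
  proof (cases "mu > 0")
    case True
    then show ?thesis using mono_pos mono_on_subset by blast
  next
    case False
    define m where "m = -mu"
    have m: "m > 0" and mu_eq: "mu = -m" using False mu by (auto simp: m_def)
    have "{x. sslud_R mu x > 0} \<subseteq> {..<m}"
    proof
      fix x assume "x \<in> {x. sslud_R mu x > 0}"
      then have "Rn m x > 0" using m by (simp add: mu_eq R_neg_formula)
      then show "x \<in> {..<m}" using m by (cases "x = m") (auto simp: Rn_def split: if_splits)
    qed
    then show ?thesis using mono_neg[OF m] mono_on_subset unfolding mu_eq by blast
  qed
qed

end
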